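(* Let $K$ be a field of characteristic zero, let $L$ be a $K$-linear functional on $K[u]$ with moments $\mu_s=L(u^s)$, and let $(p_n(x))_{n\ge0}$ be monic polynomials over $K$ with $\deg p_n=n$ and $L(p_m p_n)=\omega_n\delta_{m,n}$, $\omega_n\neq0$ for all $n$. Write $\int f(u)\,d\mu(u)$ for $L(f)$, and put $q_n(y)=\int \frac{p_n(u)}{y-u}\,d\mu(u)$. Let $k,n$ be non-negative integers and $y_1,\dots,y_k$ variables. If $n\ge k$, then $$ \frac{\det\limits_{0\le i,j\le n-1}\left(\int \frac{u^{i+j}\,d\mu(u)}{\prod_{\ell=1}^k(u-y_\ell)}\right)}{\det\limits_{0\le i,j\le n-k-1}(\mu_{i+j})} =(-1)^{nk}\frac{\det\limits_{1\le i,j\le k}\big(q_{n-k+j-1}(y_i)\big)}{\prod_{1\le i<j\le k}(y_i-y_j)}. $$ If $n<k$, then $$ \det\limits_{0\le i,j\le n-1}\left(\int \frac{u^{i+j}\,d\mu(u)}{\prod_{\ell=1}^k(u-y_\ell)}\right) =(-1)^{nk}\frac{\det N}{\prod_{1\le i<j\le k}(y_i-y_j)}, $$ where $N$ is the $k\times k$ matrix whose $i$-th row is $\big(y_i^{k-n-1},\dots,y_i^2,y_i,1,q_0(y_i),q_1(y_i),\dots,q_{n-1}(y_i)\big)$. Determinants of empty matrices and empty products equal $1$.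
   Context: The notation $\int f(u)\,d\mu(u)$ means $L(f)$; it may be read analytically (if $L$ is given by a measure) or formally: $\frac{1}{u-y}$ for a variable $y$ is expanded as $-\sum_{i\ge0}u^iy^{-i-1}$, a formal power series in $1/y$, and $L$ is applied coefficientwise. In particular $q_n(y)=\sum_{i\ge0}L(u^ip_n(u))\,y^{-i-1}$. *)

theory Defs
  imports "HOL-Library.Poly_Mapping"
          "HOL-Computational_Algebra.Formal_Laurent_Series"
          "Jordan_Normal_Form.Determinant"
begin

text \<open>Coefficient ring: Laurent polynomials over K in indeterminates Y_1, Y_2, ...
  (type lpoly).  A formal Laurent series in 1/y_1,...,1/y_k (exponents bounded
  above) is encoded as a formal Laurent series in an auxiliary grading variable t
  with coefficients in lpoly, via the injective ring homomorphism
  y_l |-> Y_l * t^(-1)  (so each monomial prod y_l^(e_l) becomes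
  Y^e * t^(-(e_1+...+e_k))).\<close>

type_synonym 'a lpoly = "(nat \<Rightarrow>\<^sub>0 int) \<Rightarrow>\<^sub>0 'a"

definition lconst :: "'a::comm_ring_1 \<Rightarrow> 'a lpoly" where
  "lconst c = Poly_Mapping.single 0 c"

definition Ymon :: "nat \<Rightarrow> int \<Rightarrow> 'a::comm_ring_1 lpoly" where
  "Ymon l e = Poly_Mapping.single (Poly_Mapping.single l e) 1"

definition yv :: "nat \<Rightarrow> 'a::comm_ring_1 lpoly fls" where
  "yv l = fls_const (Ymon l 1) * fls_X_inv"

text \<open>The formal expansion of 1/(u - y_l) = - sum_{i>=0} u^i y_l^(-i-1), a series in 1/y_l
  whose coefficients are polynomials in u.  Coefficient of t^m (m >= 1) is - u^(m-1) Y_l^(-m).\<close>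
definition cauchy_kernel :: "nat \<Rightarrow> 'a::comm_ring_1 lpoly poly fls" where
  "cauchy_kernel l = Abs_fls (\<lambda>m::int. if m \<ge> 1 then - monom (Ymon l (- m)) (nat (m - 1)) else 0)"

definition applyL :: "('a::comm_ring_1 poly \<Rightarrow> 'a) \<Rightarrow> 'a lpoly poly \<Rightarrow> 'a lpoly" where
  "applyL L P = (\<Sum>i\<le>degree P. coeff P i * lconst (L (monom 1 i)))"

definition flsL :: "('a::comm_ring_1 poly \<Rightarrow> 'a) \<Rightarrow> 'a lpoly poly fls \<Rightarrow> 'a lpoly fls" where
  "flsL L F = Abs_fls (\<lambda>m. applyL L (fls_nth F m))"

definition liftpoly :: "'a::comm_ring_1 poly \<Rightarrow> 'a lpoly poly fls" where
  "liftpoly f = fls_const (map_poly lconst f)"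

text \<open>int f(u) d mu(u) / prod_{l=1}^k (u - y_l)\<close>
definition cint :: "('a::comm_ring_1 poly \<Rightarrow> 'a) \<Rightarrow> 'a poly \<Rightarrow> nat \<Rightarrow> 'a lpoly fls" where
  "cint L f k = flsL L (liftpoly f * (\<Prod>l\<in>{1..k}. cauchy_kernel l))"

text \<open>q_f(y_l) = int f(u) d mu(u) / (y_l - u)\<close>
definition qv :: "('a::comm_ring_1 poly \<Rightarrow> 'a) \<Rightarrow> 'a poly \<Rightarrow> nat \<Rightarrow> 'a lpoly fls" where
  "qv L f l = flsL L (liftpoly f * (- cauchy_kernel l))"

definition const_fls :: "'a::comm_ring_1 \<Rightarrow> 'a lpoly fls" where
  "const_fls c = fls_const (lconst c)"

definition hankel_det :: "('a::comm_ring_1 poly \<Rightarrow> 'a) \<Rightarrow> nat \<Rightarrow> 'a" where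
  "hankel_det L m = det (mat m m (\<lambda>(i,j). L (monom 1 (i + j))))"

definition vand :: "nat \<Rightarrow> 'a::comm_ring_1 lpoly fls" where
  "vand k = (\<Prod>(i,j)\<in>{(i,j). 1 \<le> i \<and> i < j \<and> j \<le> k}. yv i - yv j)"

end

theory Submission
  imports Defs "Jordan_Normal_Form.Char_Poly"
begin

lemma fls_times_nth_gen:
  fixes f g :: "'b::comm_ring_1 fls"
  assumes f: "\<And>i. i < N \<Longrightarrow> fls_nth f i = 0" and g: "\<And>i. i < M \<Longrightarrow> fls_nth g i = 0"
  shows "fls_nth (f * g) n = (\<Sum>i=N..n-M. fls_nth f i * fls_nth g (n - i))"
proof (cases "f = 0 \<or> g = 0")
  case True thus ?thesis by auto
next
  case False
  hence "N \<le> fls_subdegree f" using f nth_fls_subdegree_nonzero by (metis not_le)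
  moreover have "M \<le> fls_subdegree g" using False g nth_fls_subdegree_nonzero by (metis not_le)
  ultimately have sub: "{fls_subdegree f..n - fls_subdegree g} \<subseteq> {N..n-M}" by auto
  have "fls_nth (f * g) n = (\<Sum>i=fls_subdegree f..n - fls_subdegree g. fls_nth f i * fls_nth g (n - i))"
    by (rule fls_times_nth(2))
  also have "\<dots> = (\<Sum>i=N..n-M. fls_nth f i * fls_nth g (n - i))"
  proof (rule sum.mono_neutral_left[OF _ sub])
    show "\<forall>i\<in>{N..n - M} - {fls_subdegree f..n - fls_subdegree g}. fls_nth f i * fls_nth g (n - i) = 0"
    proof
      fix i assume "i \<in> {N..n - M} - {fls_subdegree f..n - fls_subdegree g}"
      hence "i < fls_subdegree f \<or> n - i < fls_subdegree g" by auto
      thus "fls_nth f i * fls_nth g (n - i) = 0" by auto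
    qed
  qed simp
  finally show ?thesis .
qed

definition iota :: "'b::comm_ring_1 fls \<Rightarrow> 'b poly fls" where
  "iota c = Abs_fls (\<lambda>m. [: fls_nth c m :])"

lemma iota_nth[simp]: "fls_nth (iota c) m = [: fls_nth c m :]"
  unfolding iota_def by (rule nth_Abs_fls_lower_bound[of "fls_subdegree c"]) simp

lemma pCons_sum: "(\<Sum>x\<in>A. [: f x :]) = [: \<Sum>x\<in>A. f x :]"
  by (induction A rule: infinite_finite_induct) auto

lemma iota_hom: "comm_ring_hom (iota :: 'b::comm_ring_1 fls \<Rightarrow> _)"
proof
  fix x y :: "'b fls"
  show "iota (x + y) = iota x + iota y" by (rule fls_eqI) simp
  show "iota (x * y) = iota x * iota y"
  proof (rule fls_eqI)
    fix n
    have "fls_nth (iota x * iota y) n = (\<Sum>i=fls_subdegree x..n-fls_subdegree y. fls_nth (iota x) i * fls_nth (iota y) (n - i))"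
      by (rule fls_times_nth_gen) auto
    also have "\<dots> = [: fls_nth (x * y) n :]"
      by (simp add: fls_times_nth(2) pCons_sum mult.commute)
    finally show "fls_nth (iota (x * y)) n = fls_nth (iota x * iota y) n" by simp
  qed
  show "iota 1 = 1" by (rule fls_eqI) (simp add: one_pCons)
  show "iota 0 = 0" by (rule fls_eqI) simp
qed

interpretation iota: map_poly_comm_ring_hom iota by (rule map_poly_comm_ring_hom.intro, rule iota_hom)

lemma iota_const[simp]: "iota (fls_const c) = fls_const [:c:]"
  by (rule fls_eqI) simp

lemma iota_X_inv[simp]: "iota fls_X_inv = fls_X_inv"
  by (rule fls_eqI) (simp add: one_pCons)

lemma Ymon_mult: "Ymon l a * Ymon l b = (Ymon l (a + b) :: 'a::comm_ring_1 lpoly)"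
  unfolding Ymon_def by (simp add: mult_single single_add)

lemma Ymon_0[simp]: "Ymon l 0 = (1 :: 'a::comm_ring_1 lpoly)"
  unfolding Ymon_def by simp

lemma lconst_0[simp]: "lconst 0 = 0" unfolding lconst_def by simp
lemma lconst_1[simp]: "lconst 1 = 1" unfolding lconst_def by simp
lemma lconst_add: "lconst (a + b) = lconst a + lconst b" unfolding lconst_def by (simp add: single_add)
lemma lconst_mult: "lconst (a * b) = lconst a * lconst b" unfolding lconst_def by (simp add: mult_single)
lemma lconst_sum: "lconst (sum f A) = (\<Sum>x\<in>A. lconst (f x))"
  by (induction A rule: infinite_finite_induct) (auto simp: lconst_add)

lemma ck_nth: "fls_nth (cauchy_kernel l) m = (if m \<ge> 1 then - monom (Ymon l (- m)) (nat (m - 1)) else 0)"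
  unfolding cauchy_kernel_def by (rule nth_Abs_fls_lower_bound[of 1]) simp

definition uS :: "'a::comm_ring_1 lpoly poly fls" where "uS = fls_const [:0, 1:]"

lemma ck_inv: "(uS - iota (yv l)) * cauchy_kernel l = (1 :: 'a::comm_ring_1 lpoly poly fls)"
proof (rule fls_eqI)
  fix n :: int
  have e: "iota (yv l) * cauchy_kernel l = fls_const [:Ymon l 1:] * (fls_X_inv * cauchy_kernel l)"
    unfolding yv_def by (simp add: iota.base.hom_mult mult.assoc)
  have "fls_nth ((uS - iota (yv l)) * cauchy_kernel l) n
     = [:0,1:] * fls_nth (cauchy_kernel l) n - [:Ymon l 1:] * fls_nth (cauchy_kernel l) (n + 1)"
    unfolding left_diff_distrib e uS_def by (simp add: fls_X_inv_times_conv_shift)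
  also have "\<dots> = (if n = 0 then 1 else 0)"
  proof -
    { assume "n \<ge> 1"
      hence "nat n = Suc (nat (n - 1))" by simp
      hence ?thesis using \<open>n \<ge> 1\<close> 
        by (simp add: ck_nth smult_monom Ymon_mult monom_Suc)
    } moreover
    { assume "n = 0" hence ?thesis by (simp add: ck_nth Ymon_mult smult_monom one_pCons) }
    moreover
    { assume "n < 0" hence ?thesis by (simp add: ck_nth) }
    ultimately show ?thesis by linarith
  qed
  finally show "fls_nth ((uS - iota (yv l)) * cauchy_kernel l) n = fls_nth 1 n" by simp
qed

lemma applyL_bound:
  assumes "degree P \<le> N"
  shows "applyL L P = (\<Sum>i\<le>N. coeff P i * lconst (L (monom 1 i)))"
  unfolding applyL_def
  by (rule sum.mono_neutral_left) (use assms in \<open>auto simp: coeff_eq_0\<close>)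

lemma applyL_0[simp]: "applyL L 0 = 0" unfolding applyL_def by simp

lemma applyL_add: "applyL L (P + Q) = applyL L P + applyL L Q"
proof -
  let ?N = "max (degree P) (degree Q)"
  have "degree (P + Q) \<le> ?N" by (rule degree_add_le) auto
  thus ?thesis
    by (simp add: applyL_bound[of _ ?N] sum.distrib distrib_right)
qed

lemma applyL_smult: "applyL L (Polynomial.smult c P) = c * applyL L P"
  by (simp add: applyL_bound[OF degree_smult_le] applyL_bound[of P "degree P"] sum_distrib_left mult.assoc)

lemma applyL_uminus: "applyL L (- P) = - applyL L P"
  using applyL_smult[of L "-1" P] by simp

lemma applyL_sum: "applyL L (sum f A) = (\<Sum>x\<in>A. applyL L (f x))"
  by (induction A rule: infinite_finite_induct) (auto simp: applyL_add)

lemma flsL_nth: "fls_nth (flsL L F) m = applyL L (fls_nth F m)"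
  unfolding flsL_def by (rule nth_Abs_fls_lower_bound[of "fls_subdegree F"]) simp

lemma flsL_add: "flsL L (F + G) = flsL L F + flsL L G"
  by (rule fls_eqI) (simp add: flsL_nth applyL_add)

lemma flsL_uminus: "flsL L (- F) = - flsL L F"
  by (rule fls_eqI) (simp add: flsL_nth applyL_uminus)

lemma flsL_diff: "flsL L (F - G) = flsL L F - flsL L G"
  using flsL_add[of L F "- G"] by (simp add: flsL_uminus)

lemma flsL_iota: "flsL L (iota c * F) = c * flsL L F"
proof (rule fls_eqI)
  fix m
  have "fls_nth (flsL L (iota c * F)) m = applyL L (\<Sum>i=fls_subdegree c..m-fls_subdegree F. fls_nth (iota c) i * fls_nth F (m - i))"
    by (simp add: flsL_nth, subst fls_times_nth_gen[where N="fls_subdegree c" and M="fls_subdegree F"]) auto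
  also have "\<dots> = (\<Sum>i=fls_subdegree c..m-fls_subdegree F. fls_nth c i * fls_nth (flsL L F) (m - i))"
    by (simp add: applyL_sum applyL_smult flsL_nth)
  also have "\<dots> = fls_nth (c * flsL L F) m"
    by (rule fls_times_nth_gen[symmetric]) (auto simp: flsL_nth)
  finally show "fls_nth (flsL L (iota c * F)) m = fls_nth (c * flsL L F) m" .
qed

lemma flsL_const: "flsL L (fls_const P) = fls_const (applyL L P)"
  by (rule fls_eqI) (simp add: flsL_nth)

definition psi :: "'a::comm_ring_1 lpoly fls poly \<Rightarrow> 'a lpoly poly fls" where
  "psi P = poly (map_poly iota P) uS"

lemma psi_add: "psi (P + Q) = psi P + psi Q"
  unfolding psi_def by (simp add: iota.hom_add)
lemma psi_mult: "psi (P * Q) = psi P * psi Q"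
  unfolding psi_def by (simp add: iota.hom_mult)
lemma psi_smult: "psi (Polynomial.smult c P) = iota c * psi P"
  unfolding psi_def by (simp add: iota.base.map_poly_hom_smult)
lemma psi_const: "psi [:c:] = iota c"
  unfolding psi_def by (simp only: iota.base.map_poly_pCons_hom map_poly_0) simp
lemma psi_one: "psi 1 = 1"
  unfolding psi_def by simp
lemma psi_prod: "psi (prod f A) = (\<Prod>x\<in>A. psi (f x))"
  by (induction A rule: infinite_finite_induct) (auto simp: psi_mult psi_one)
lemma psi_lin: "psi [:- y, 1:] = uS - iota y"
  unfolding psi_def by (simp add: iota.base.hom_uminus iota.base.hom_zero iota.base.hom_one)
lemma psi_X: "psi [:0, 1:] = uS"
  unfolding psi_def by simp

lemma fls_const_pCons: "fls_const (pCons c q) = fls_const [:c:] + uS * fls_const q"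
  unfolding uS_def by (rule fls_eqI) simp

lemma const_fls_0[simp]: "const_fls 0 = (0 :: 'a::comm_ring_1 lpoly fls)" unfolding const_fls_def by simp

lemma map_poly_pCons0: "f 0 = 0 \<Longrightarrow> map_poly f (pCons c p) = pCons (f c) (map_poly f p)"
  by (cases "c = 0 \<and> p = 0") (auto simp: map_poly_pCons)

lemma liftpoly_psi: "liftpoly f = psi (map_poly const_fls f)"
proof (induction f)
  case 0
  then show ?case unfolding liftpoly_def psi_def by simp
next
  case (pCons a p)
  have "liftpoly (pCons a p) = fls_const [:lconst a:] + uS * liftpoly p"
    unfolding liftpoly_def map_poly_pCons0[of lconst, OF lconst_0] by (rule fls_const_pCons)
  also have "\<dots> = iota (const_fls a) + uS * psi (map_poly const_fls p)"
    unfolding pCons.IH by (simp only: const_fls_def iota_const)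
  also have "\<dots> = psi (map_poly const_fls (pCons a p))"
    unfolding psi_def by (simp only: map_poly_pCons0[of const_fls, OF const_fls_0] iota.base.map_poly_pCons_hom poly_pCons)
  finally show ?case .
qed

lemma X_pow: "[:0,1:]^m = (monom 1 m :: 'b::comm_ring_1 poly)"
  by (simp add: monom_altdef)

lemma uS_power: "uS ^ m = fls_const (monom 1 m)"
  unfolding uS_def X_pow[symmetric] by (rule fls_const_power[symmetric])

definition Kk :: "nat \<Rightarrow> 'a::comm_ring_1 lpoly poly fls" where
  "Kk k = (\<Prod>l\<in>{1..k}. cauchy_kernel l)"

definition II :: "('a::comm_ring_1 poly \<Rightarrow> 'a) \<Rightarrow> nat \<Rightarrow> 'a lpoly fls poly \<Rightarrow> 'a lpoly fls" where
  "II L k P = flsL L (psi P * Kk k)"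

definition PP :: "nat \<Rightarrow> 'a::comm_ring_1 lpoly fls poly" where
  "PP k = (\<Prod>l\<in>{1..k}. [:- yv l, 1:])"

lemma II_add: "II L k (P + Q) = II L k P + II L k Q"
  unfolding II_def by (simp add: psi_add distrib_right flsL_add)

lemma II_smult: "II L k (Polynomial.smult c P) = c * II L k P"
  unfolding II_def by (simp add: psi_smult mult.assoc flsL_iota)

lemma psi_monom1: "psi (monom 1 m) = uS ^ m"
  unfolding psi_def monom_altdef smult_1_left by (simp only: iota.hom_power poly_power iota.base.map_poly_pCons_hom map_poly_0) (simp add: uS_def)

lemma liftpoly_monom1: "liftpoly (monom 1 m) = uS ^ m"
  unfolding liftpoly_def uS_power by (simp only: map_poly_monom[of lconst, OF lconst_0] lconst_1)

lemma cint_II: "cint L (monom 1 m) k = II L k (monom 1 m)"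
  unfolding cint_def II_def psi_monom1 liftpoly_monom1 Kk_def ..

lemma const_fls_mult: "const_fls (a * b) = (const_fls a * const_fls b :: 'a::comm_ring_1 lpoly fls)"
  unfolding const_fls_def by (simp add: lconst_mult)
lemma const_fls_1[simp]: "const_fls 1 = (1 :: 'a::comm_ring_1 lpoly fls)"
  unfolding const_fls_def by simp
lemma const_fls_prod: "const_fls (prod f A) = (\<Prod>x\<in>A. const_fls (f x) :: 'a::comm_ring_1 lpoly fls)"
  by (induction A rule: infinite_finite_induct) (auto simp: const_fls_mult)

locale Lfun =
  fixes L :: "'a::field_char_0 poly \<Rightarrow> 'a"
  assumes L_add: "\<And>f g. L (f + g) = L f + L g"
    and L_smult: "\<And>c f. L (Polynomial.smult c f) = c * L f"
begin

lemma L_zero: "L 0 = 0" using L_smult[of 0 0] by simp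

lemma L_sum: "L (sum f A) = (\<Sum>x\<in>A. L (f x))"
  by (induction A rule: infinite_finite_induct) (auto simp: L_add L_zero)

lemma L_expand: "L f = (\<Sum>i\<le>degree f. coeff f i * L (monom 1 i))"
proof -
  have "L f = L (\<Sum>i\<le>degree f. monom (coeff f i) i)" by (simp add: poly_as_sum_of_monoms)
  also have "\<dots> = (\<Sum>i\<le>degree f. coeff f i * L (monom 1 i))"
    unfolding L_sum by (rule sum.cong[OF refl]) (metis L_smult mult.right_neutral smult_monom)
  finally show ?thesis .
qed

lemma applyL_lift: "applyL L (map_poly lconst f) = lconst (L f)"
proof -
  have "applyL L (map_poly lconst f) = (\<Sum>i\<le>degree f. coeff (map_poly lconst f) i * lconst (L (monom 1 i)))"
    by (rule applyL_bound) (rule degree_map_poly_le)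
  also have "\<dots> = lconst (L f)"
    by (subst L_expand) (simp add: coeff_map_poly lconst_sum lconst_mult)
  finally show ?thesis .
qed

lemma flsL_liftpoly: "flsL L (liftpoly f) = const_fls (L f)"
  unfolding liftpoly_def flsL_const applyL_lift const_fls_def ..

end

lemma psiPP_K: "psi (PP k) * Kk k = (1 :: 'a::comm_ring_1 lpoly poly fls)"
  unfolding PP_def Kk_def psi_prod psi_lin prod.distrib[symmetric] ck_inv by simp

lemma (in Lfun) II_PP: "II L k (map_poly const_fls f * PP k) = const_fls (L f)"
  unfolding II_def psi_mult liftpoly_psi[symmetric] mult.assoc psiPP_K by (simp add: flsL_liftpoly)

lemma poly_PP_zero: "l \<in> {1..k} \<Longrightarrow> poly (PP k) (yv l) = 0"
  unfolding PP_def poly_prod by (rule prod_zero) auto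

lemma PP_factor: assumes "l \<in> {1..k}" shows "[:- yv l, 1:] * synthetic_div (PP k) (yv l) = PP k"
proof -
  have e: "[:poly (PP k) (yv l):] = 0" using poly_PP_zero[OF assms] by simp
  have "[:- yv l, 1:] * synthetic_div (PP k) (yv l) = [:- yv l, 1:] * synthetic_div (PP k) (yv l) + [:poly (PP k) (yv l):]"
    unfolding e by (rule add_0_right[symmetric])
  also have "\<dots> = PP k" by (rule synthetic_div_correct')
  finally show ?thesis .
qed

lemma psi_h_K: assumes "l \<in> {1..k}"
  shows "psi (synthetic_div (PP k) (yv l)) * Kk k = (cauchy_kernel l :: 'a::comm_ring_1 lpoly poly fls)"
proof -
  let ?h = "synthetic_div (PP k) (yv l)"
  have "psi ?h * Kk k = psi ?h * ((uS - iota (yv l)) * cauchy_kernel l) * Kk k"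
    by (simp only: ck_inv mult_1_right)
  also have "\<dots> = (psi ([:- yv l, 1:] * ?h) * Kk k) * cauchy_kernel l"
    unfolding psi_mult psi_lin by (simp only: ac_simps)
  also have "psi ([:- yv l, 1:] * ?h) = psi (PP k)"
    by (rule arg_cong[where f=psi], rule PP_factor[OF assms])
  also have "psi (PP k) * Kk k = 1" by (rule psiPP_K)
  finally show ?thesis by simp
qed

lemma qv_II: assumes "l \<in> {1..k}"
  shows "qv L f l = - II L k (map_poly const_fls f * synthetic_div (PP k) (yv l))"
  unfolding qv_def II_def psi_mult liftpoly_psi[symmetric] mult.assoc psi_h_K[OF assms]
  by (simp add: flsL_uminus)

lemma poly_expand_lt:
  assumes "\<forall>a\<ge>n. coeff P a = 0"
  shows "P = (\<Sum>a<n. monom (coeff P a) a)"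
proof (rule poly_eqI)
  fix m
  have "coeff (\<Sum>a<n. monom (coeff P a) a) m = (\<Sum>a<n. if a = m then coeff P a else 0)"
    by (simp add: coeff_sum coeff_monom)
  also have "\<dots> = coeff P m" using assms by (cases "m < n") auto
  finally show "coeff P m = coeff (\<Sum>a<n. monom (coeff P a) a) m" by simp
qed

locale linI =
  fixes I :: "'r::comm_ring_1 poly \<Rightarrow> 'r"
  assumes I_add: "\<And>P Q. I (P + Q) = I P + I Q"
    and I_smult: "\<And>c P. I (Polynomial.smult c P) = c * I P"
begin

lemma I_zero: "I 0 = 0" using I_smult[of 0 0] by simp

lemma I_sum: "I (sum f A) = (\<Sum>x\<in>A. I (f x))"
  by (induction A rule: infinite_finite_induct) (auto simp: I_add I_zero)

lemma I_monom: "I (monom c m) = c * I (monom 1 m)"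
  by (metis I_smult mult.right_neutral smult_monom)

lemma I_uminus: "I (- P) = - I P"
  using I_smult[of "-1" P] by simp

lemma I_bilin:
  assumes "\<forall>a\<ge>n. coeff P a = 0" "\<forall>b\<ge>n. coeff Q b = 0"
  shows "I (P * Q) = (\<Sum>a<n. \<Sum>b<n. coeff P a * coeff Q b * I (monom 1 (a + b)))"
proof -
  have "P * Q = (\<Sum>a<n. monom (coeff P a) a) * (\<Sum>b<n. monom (coeff Q b) b)"
    using poly_expand_lt[OF assms(1)] poly_expand_lt[OF assms(2)] by simp
  also have "\<dots> = (\<Sum>a<n. \<Sum>b<n. monom (coeff P a * coeff Q b) (a + b))"
    by (simp add: sum_product mult_monom)
  finally have "I (P * Q) = (\<Sum>a<n. \<Sum>b<n. I (monom (coeff P a * coeff Q b) (a + b)))"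
    by (simp only: I_sum)
  also have "\<dots> = (\<Sum>a<n. \<Sum>b<n. coeff P a * coeff Q b * I (monom 1 (a + b)))"
    by (intro sum.cong refl I_monom)
  finally show ?thesis .
qed

lemma bilin_mat:
  assumes P: "\<And>i. i < r \<Longrightarrow> \<forall>a\<ge>n. coeff (P i) a = 0"
    and Q: "\<And>j. j < c \<Longrightarrow> \<forall>b\<ge>n. coeff (Q j) b = 0"
  shows "mat r c (\<lambda>(i,j). I (P i * Q j)) =
    mat r n (\<lambda>(i,a). coeff (P i) a) * mat n n (\<lambda>(a,b). I (monom 1 (a+b))) * (mat c n (\<lambda>(j,b). coeff (Q j) b))\<^sup>T"
proof (rule eq_matI)
  fix i j assume ij: "i < dim_row (mat r n (\<lambda>(i,a). coeff (P i) a) * mat n n (\<lambda>(a,b). I (monom 1 (a+b))) * (mat c n (\<lambda>(j,b). coeff (Q j) b))\<^sup>T)"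
     "j < dim_col (mat r n (\<lambda>(i,a). coeff (P i) a) * mat n n (\<lambda>(a,b). I (monom 1 (a+b))) * (mat c n (\<lambda>(j,b). coeff (Q j) b))\<^sup>T)"
  hence i: "i < r" and j: "j < c" by auto
  have "(mat r n (\<lambda>(i,a). coeff (P i) a) * mat n n (\<lambda>(a,b). I (monom 1 (a+b))) * (mat c n (\<lambda>(j,b). coeff (Q j) b))\<^sup>T) $$ (i, j)
     = (\<Sum>b<n. (\<Sum>a<n. coeff (P i) a * I (monom 1 (a + b))) * coeff (Q j) b)"
    using i j by (simp add: scalar_prod_def atLeast0LessThan)
  also have "\<dots> = I (P i * Q j)"
    unfolding I_bilin[OF P[OF i] Q[OF j]]
    by (subst sum.swap) (simp add: sum_distrib_right sum_distrib_left ac_simps)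
  finally show "mat r c (\<lambda>(i,j). I (P i * Q j)) $$ (i, j) = (mat r n (\<lambda>(i,a). coeff (P i) a) * mat n n (\<lambda>(a,b). I (monom 1 (a+b))) * (mat c n (\<lambda>(j,b). coeff (Q j) b))\<^sup>T) $$ (i, j)"
    using i j by simp
qed auto

end

locale OP =
  fixes L :: "'a::field poly \<Rightarrow> 'a" and p :: "nat \<Rightarrow> 'a poly" and \<omega> :: "nat \<Rightarrow> 'a"
  assumes L_add: "\<And>f g. L (f + g) = L f + L g"
    and L_smult: "\<And>c f. L (Polynomial.smult c f) = c * L f"
    and p_monic: "\<And>m. lead_coeff (p m) = 1"
    and p_deg: "\<And>m. degree (p m) = m"
    and p_orth: "\<And>m m'. L (p m * p m') = (if m = m' then \<omega> m' else 0)"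
begin

lemma L_zero: "L 0 = 0" using L_smult[of 0 0] by simp

lemma p_coeff_top: "coeff (p i) i = 1" using p_monic[of i] p_deg[of i] by simp

lemma p_coeff_high: "i < j \<Longrightarrow> coeff (p i) j = 0"
  using p_deg[of i] by (simp add: coeff_eq_0)

lemma L_p_smult: "L (p i * Polynomial.smult c q) = c * L (p i * q)"
  by (simp add: L_smult)

lemma orth_aux: "degree f \<le> d \<Longrightarrow> d < i \<Longrightarrow> L (p i * f) = 0"
proof (induction d arbitrary: f)
  case 0
  have p0: "p 0 = 1"
  proof -
    have "degree (p 0) = 0" by (rule p_deg)
    then obtain c where "p 0 = [:c:]" by (metis degree_eq_zeroE)
    with p_monic[of 0] show ?thesis by (simp add: one_pCons)
  qed
  from 0 have "f = [:coeff f 0:]" by (metis degree_eq_zeroE le_zero_eq coeff_pCons_0)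
  hence "f = Polynomial.smult (coeff f 0) (p 0)" by (simp add: p0)
  hence "L (p i * f) = coeff f 0 * L (p i * p 0)" by (metis L_p_smult)
  also have "\<dots> = 0" using 0 p_orth[of i 0] by simp
  finally show ?case .
next
  case (Suc d)
  define c where "c = coeff f (Suc d)"
  define g where "g = f - Polynomial.smult c (p (Suc d))"
  have "degree g \<le> d"
  proof (rule degree_le, intro allI impI)
    fix m assume "d < m"
    show "coeff g m = 0"
    proof (cases "m = Suc d")
      case True thus ?thesis by (simp add: g_def c_def p_coeff_top)
    next
      case False hence "Suc d < m" using \<open>d < m\<close> by simp
      thus ?thesis using Suc.prems(1) by (simp add: g_def coeff_eq_0 p_coeff_high)
    qed
  qed
  hence "L (p i * g) = 0" using Suc by simp
  have "f = g + Polynomial.smult c (p (Suc d))" by (simp add: g_def)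
  hence "L (p i * f) = L (p i * g) + c * L (p i * p (Suc d))"
    by (simp add: distrib_left L_add L_smult)
  also have "\<dots> = 0" using \<open>L (p i * g) = 0\<close> p_orth[of i "Suc d"] Suc.prems by simp
  finally show ?case .
qed

lemma orth_lt: "degree f < i \<Longrightarrow> L (p i * f) = 0"
  by (rule orth_aux[of f "degree f"]) auto

lemma orth_monom: "j < i \<Longrightarrow> L (p i * monom 1 j) = 0"
  by (rule orth_lt) (simp add: degree_monom_eq)

lemma orth_self: "L (p i * monom 1 i) = \<omega> i"
proof -
  have "L (p i * p i) = L (p i * (p i - monom 1 i)) + L (p i * monom 1 i)"
    unfolding L_add[symmetric] by (simp add: algebra_simps)
  hence "L (p i * monom 1 i) = L (p i * p i) - L (p i * (p i - monom 1 i))"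
    by (simp add: algebra_simps)
  also have "L (p i * (p i - monom 1 i)) = 0"
  proof (cases "i = 0")
    case True
    have "p 0 = 1"
    proof -
      have "degree (p 0) = 0" by (rule p_deg)
      then obtain c where "p 0 = [:c:]" by (metis degree_eq_zeroE)
      with p_monic[of 0] show ?thesis by (simp add: one_pCons)
    qed
    thus ?thesis using True by (simp add: L_zero)
  next
    case False
    have "degree (p i - monom 1 i) \<le> i - 1"
    proof (rule degree_le, intro allI impI)
      fix m assume "i - 1 < m"
      thus "coeff (p i - monom 1 i) m = 0" using False
        by (cases "m = i") (auto simp: p_coeff_top p_coeff_high coeff_monom)
    qed
    thus ?thesis using False by (intro orth_aux[of _ "i - 1"]) auto
  qed
  finally show ?thesis using p_orth[of i i] by simp
qed

end

lemma prod_list_upt: "prod_list (map f [0..<n]) = (\<Prod>i<n. f i)"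
  by (induction n) auto

lemma det_lower_one:
  assumes "A \<in> carrier_mat n n" "\<And>i j. i < j \<Longrightarrow> j < n \<Longrightarrow> A $$ (i,j) = 0" "\<And>i. i < n \<Longrightarrow> A $$ (i,i) = 1"
  shows "det A = 1"
proof -
  have "det A = prod_list (diag_mat A)" by (rule det_lower_triangular[OF assms(2) assms(1)])
  also have "\<dots> = (\<Prod>i<n. A $$ (i,i))" using assms(1) by (simp add: diag_mat_def prod_list_upt)
  also have "\<dots> = 1" using assms(3) by simp
  finally show ?thesis .
qed

lemma det_upper_prod:
  assumes "A \<in> carrier_mat n n" "\<And>i j. j < i \<Longrightarrow> i < n \<Longrightarrow> A $$ (i,j) = 0"
  shows "det A = (\<Prod>i<n. A $$ (i,i))"
proof -
  have "upper_triangular A" using assms unfolding upper_triangular_def by auto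
  hence "det A = prod_list (diag_mat A)" by (rule det_upper_triangular[OF _ assms(1)])
  also have "\<dots> = (\<Prod>i<n. A $$ (i,i))" using assms(1) by (simp add: diag_mat_def prod_list_upt)
  finally show ?thesis .
qed

locale absS = linI I + OP L p \<omega>
  for I :: "'r::idom poly \<Rightarrow> 'r" and L :: "'a::field poly \<Rightarrow> 'a" and p \<omega> +
  fixes cst :: "'a \<Rightarrow> 'r" and PPk :: "'r poly" and k :: nat
  assumes cst_0: "cst 0 = 0" and cst_1: "cst 1 = 1"
    and I_PP: "\<And>f. I (map_poly cst f * PPk) = cst (L f)"
    and PP_deg: "degree PPk = k" and PP_lead: "coeff PPk k = 1"
begin

lemma coeff_mult_monom: "coeff ((q::'b::comm_ring_1 poly) * monom 1 j) b = (if j \<le> b then coeff q (b - j) else 0)"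
  by (subst mult.commute) (simp add: coeff_monom_mult)

definition Pr where "Pr i = map_poly cst (p i)"

lemma Pr_coeff: "coeff (Pr i) a = cst (coeff (p i) a)"
  unfolding Pr_def by (simp add: coeff_map_poly cst_0)

lemma Pr_high: "i < a \<Longrightarrow> coeff (Pr i) a = 0"
  by (simp add: Pr_coeff p_coeff_high cst_0)

lemma lift_monom: "map_poly cst f * monom 1 j = map_poly cst (f * monom 1 j)"
  by (rule poly_eqI) (simp add: coeff_mult_monom coeff_map_poly cst_0)

lemma I_orth: "I (Pr i * (PPk * monom 1 j)) = cst (L (p i * monom 1 j))"
proof -
  have "Pr i * (PPk * monom 1 j) = (Pr i * monom 1 j) * PPk"
    by (simp only: ac_simps)
  also have "\<dots> = map_poly cst (p i * monom 1 j) * PPk"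
    unfolding Pr_def lift_monom ..
  finally show ?thesis by (simp only: I_PP)
qed

lemma PPmon_coeff: "coeff (PPk * monom 1 j) b = (if j \<le> b then coeff PPk (b - j) else 0)"
  by (rule coeff_mult_monom)

lemma PP_high: "k < a \<Longrightarrow> coeff PPk a = 0"
  using PP_deg by (simp add: coeff_eq_0)

definition Uc where "Uc t b = (if b \<le> t then coeff PPk (k - t + b) else 0)"

lemma det_Uc: "n \<le> k \<Longrightarrow> det (mat n n (\<lambda>(t,b). Uc t b)) = 1"
  by (rule det_lower_one) (auto simp: Uc_def PP_lead)

end

context absS
begin

lemma detA: "det (mat n n (\<lambda>(i,a). coeff (Pr i) a)) = 1"
  by (rule det_lower_one) (auto simp: Pr_coeff p_coeff_high p_coeff_top cst_1 cst_0)

lemma detB: "det (mat (k+m) (k+m) (\<lambda>(j,b). coeff (if j < m then PPk * monom 1 j else monom 1 (j - m)) b)) = (-1)^(k*m)"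
  (is "det ?B = _")
proof -
  have "det ?B = (-1)^(k*m) * det (mat (k+m) (k+m) (\<lambda>(i,j). ?B $$ ((if i < k then i + m else i - k), j)))"
    by (rule det_swap_rows) simp
  also have "det (mat (k+m) (k+m) (\<lambda>(i,j). ?B $$ ((if i < k then i + m else i - k), j))) = 1"
  proof (rule det_lower_one)
    fix i j assume ij: "i < j" "j < k + m"
    show "mat (k+m) (k+m) (\<lambda>(i,j). ?B $$ ((if i < k then i + m else i - k), j)) $$ (i, j) = 0"
      using ij by (auto simp: PPmon_coeff PP_high)
  next
    fix i assume i: "i < k + m"
    show "mat (k+m) (k+m) (\<lambda>(i,j). ?B $$ ((if i < k then i + m else i - k), j)) $$ (i, i) = 1"
      using i by (auto simp: PPmon_coeff PP_lead)
  qed simp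
  finally show ?thesis by simp
qed

lemma detH: "det (mat (m+k) (m+k) (\<lambda>(i,j). I (Pr i * (if j < m then PPk * monom 1 j else monom 1 (j - m)))))
   = (\<Prod>i<m. cst (\<omega> i)) * det (mat k k (\<lambda>(a,b). I (Pr (m+a) * monom 1 b)))"
  (is "det ?H = _ * det ?D")
proof -
  let ?U = "mat m m (\<lambda>(i,j). I (Pr i * (PPk * monom 1 j)))"
  let ?X = "mat m k (\<lambda>(i,j). I (Pr i * monom 1 j))"
  have "?H = four_block_mat ?U ?X (0\<^sub>m k m) ?D"
  proof (rule eq_matI)
    fix i j assume "i < dim_row (four_block_mat ?U ?X (0\<^sub>m k m) ?D)" "j < dim_col (four_block_mat ?U ?X (0\<^sub>m k m) ?D)"
    hence ij: "i < m + k" "j < m + k" by auto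
    show "?H $$ (i,j) = four_block_mat ?U ?X (0\<^sub>m k m) ?D $$ (i,j)"
    proof (cases "i < m")
      case True thus ?thesis using ij by auto
    next
      case False
      thus ?thesis using ij by (auto simp: I_orth orth_monom cst_0)
    qed
  qed auto
  hence "det ?H = det ?U * det ?D"
    by (simp add: det_four_block_mat_lower_left_zero[of ?U m ?X k "0\<^sub>m k m" ?D])
  also have "det ?U = (\<Prod>i<m. cst (\<omega> i))"
    by (subst det_upper_prod[of _ m]) (auto simp: I_orth orth_monom orth_self cst_0)
  finally show ?thesis .
qed

lemma Q_fact:
  assumes H_exp: "\<And>i F. i < k \<Longrightarrow> I (F * h i) = (\<Sum>t<k. z i ^ (k-1-t) * (\<Sum>b<k. Uc t b * I (F * monom 1 b)))"
  shows "mat k k (\<lambda>(i,j). - I (Fs j * h i)) = (-1) \<cdot>\<^sub>m (mat k k (\<lambda>(i,t). z i ^ (k-1-t)) * mat k k (\<lambda>(t,b). Uc t b) * (mat k k (\<lambda>(j,b). I (Fs j * monom 1 b)))\<^sup>T)"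
proof (rule eq_matI)
  fix i j assume "i < dim_row ((-1) \<cdot>\<^sub>m (mat k k (\<lambda>(i,t). z i ^ (k-1-t)) * mat k k (\<lambda>(t,b). Uc t b) * (mat k k (\<lambda>(j,b). I (Fs j * monom 1 b)))\<^sup>T))"
    "j < dim_col ((-1) \<cdot>\<^sub>m (mat k k (\<lambda>(i,t). z i ^ (k-1-t)) * mat k k (\<lambda>(t,b). Uc t b) * (mat k k (\<lambda>(j,b). I (Fs j * monom 1 b)))\<^sup>T))"
  hence ij: "i < k" "j < k" by auto
  have "((-1) \<cdot>\<^sub>m (mat k k (\<lambda>(i,t). z i ^ (k-1-t)) * mat k k (\<lambda>(t,b). Uc t b) * (mat k k (\<lambda>(j,b). I (Fs j * monom 1 b)))\<^sup>T)) $$ (i,j)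
     = - (\<Sum>b<k. (\<Sum>t<k. z i ^ (k-1-t) * Uc t b) * I (Fs j * monom 1 b))"
    using ij by (simp add: scalar_prod_def atLeast0LessThan)
  also have "\<dots> = - I (Fs j * h i)"
    unfolding H_exp[OF ij(1)] sum_distrib_right sum_distrib_left
    by (subst sum.swap) (simp add: ac_simps)
  finally show "mat k k (\<lambda>(i,j). - I (Fs j * h i)) $$ (i,j) = ((-1) \<cdot>\<^sub>m (mat k k (\<lambda>(i,t). z i ^ (k-1-t)) * mat k k (\<lambda>(t,b). Uc t b) * (mat k k (\<lambda>(j,b). I (Fs j * monom 1 b)))\<^sup>T)) $$ (i,j)"
    using ij by simp
qed auto

lemma det_Q:
  assumes H_exp: "\<And>i F. i < k \<Longrightarrow> I (F * h i) = (\<Sum>t<k. z i ^ (k-1-t) * (\<Sum>b<k. Uc t b * I (F * monom 1 b)))"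
  shows "det (mat k k (\<lambda>(i,j). - I (Fs j * h i))) = (-1)^k * (det (mat k k (\<lambda>(i,t). z i ^ (k-1-t))) * det (mat k k (\<lambda>(j,b). I (Fs j * monom 1 b))))"
proof -
  let ?V = "mat k k (\<lambda>(i,t). z i ^ (k-1-t))"
  let ?U = "mat k k (\<lambda>(t,b). Uc t b)"
  let ?D = "mat k k (\<lambda>(j,b). I (Fs j * monom 1 b))"
  have "det (mat k k (\<lambda>(i,j). - I (Fs j * h i))) = (-1)^k * det (?V * ?U * ?D\<^sup>T)"
    by (subst Q_fact[where h=h and z=z, OF H_exp], assumption, subst det_smult, simp)
  also have "det (?V * ?U * ?D\<^sup>T) = det ?V * det ?U * det ?D"
    by (subst det_mult[of _ k], auto simp: det_mult[of _ k] det_transpose[of _ k])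
  finally show ?thesis by (simp add: det_Uc)
qed

lemma part1:
  assumes H_exp: "\<And>i F. i < k \<Longrightarrow> I (F * h i) = (\<Sum>t<k. z i ^ (k-1-t) * (\<Sum>b<k. Uc t b * I (F * monom 1 b)))"
  shows "det (mat (k+m) (k+m) (\<lambda>(i,j). I (monom 1 (i+j)))) * det (mat k k (\<lambda>(i,t). z i ^ (k-1-t)))
    = (-1)^((k+m)*k) * (\<Prod>i<m. cst (\<omega> i)) * det (mat k k (\<lambda>(i,j). - I (Pr (m + j) * h i)))"
proof -
  let ?n = "k + m"
  let ?G = "mat ?n ?n (\<lambda>(a,b). I (monom 1 (a+b)))"
  let ?A = "mat ?n ?n (\<lambda>(i,a). coeff (Pr i) a)"
  define Qc where "Qc j = (if j < m then PPk * monom 1 j else monom 1 (j - m))" for j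
  let ?B = "mat ?n ?n (\<lambda>(j,b). coeff (Qc j) b)"
  let ?V = "mat k k (\<lambda>(i,t). z i ^ (k-1-t))"
  let ?D = "mat k k (\<lambda>(a,b). I (Pr (m+a) * monom 1 b))"
  have H: "mat ?n ?n (\<lambda>(i,j). I (Pr i * Qc j)) = ?A * ?G * ?B\<^sup>T"
  proof (rule bilin_mat)
    fix i assume "i < ?n" thus "\<forall>a\<ge>?n. coeff (Pr i) a = 0" by (auto intro: Pr_high)
  next
    fix j assume j: "j < ?n" show "\<forall>b\<ge>?n. coeff (Qc j) b = 0"
      using j by (auto simp: Qc_def PPmon_coeff PP_high)
  qed
  have "det (mat ?n ?n (\<lambda>(i,j). I (Pr i * Qc j))) = det ?A * det ?G * det ?B"
    unfolding H by (subst det_mult[of _ ?n], auto simp: det_mult[of _ ?n] det_transpose[of _ ?n])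
  also have "det ?A = 1" by (rule detA)
  also have "det ?B = (-1)^(k*m)" unfolding Qc_def by (rule detB)
  finally have e1: "det (mat ?n ?n (\<lambda>(i,j). I (Pr i * Qc j))) = det ?G * (-1)^(k*m)" by simp
  have "det (mat ?n ?n (\<lambda>(i,j). I (Pr i * Qc j))) = (\<Prod>i<m. cst (\<omega> i)) * det ?D"
    using detH[of m] unfolding Qc_def by (simp add: add.commute)
  with e1 have e2: "det ?G * (-1)^(k*m) = (\<Prod>i<m. cst (\<omega> i)) * det ?D" by simp
  have e3: "det (mat k k (\<lambda>(i,j). - I (Pr (m + j) * h i))) = (-1)^k * (det ?V * det ?D)"
    by (rule det_Q[where h=h and z=z, OF H_exp])
  have s1: "(-1::'r)^(k*m) * (-1)^(k*m) = 1"
    by (simp add: power_add[symmetric])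
  have "even (k * k + k)" by simp
  hence s2: "(-1::'r)^((k+m)*k) * (-1)^k = (-1)^(k*m)"
  proof -
    assume ev: "even (k * k + k)"
    have "(-1::'r)^((k+m)*k) * (-1)^k = (-1)^(k*m + (k*k + k))"
      by (simp add: power_add[symmetric] algebra_simps)
    also have "\<dots> = (-1)^(k*m) * (-1)^(k*k + k)" by (rule power_add)
    also have "\<dots> = (-1)^(k*m)" by (simp only: neg_one_even_power[OF ev] mult_1_right)
    finally show ?thesis .
  qed
  have "(-1)^((k+m)*k) * (\<Prod>i<m. cst (\<omega> i)) * det (mat k k (\<lambda>(i,j). - I (Pr (m + j) * h i)))
      = ((-1)^((k+m)*k) * (-1)^k) * ((\<Prod>i<m. cst (\<omega> i)) * det ?D) * det ?V"
    unfolding e3 by (simp add: ac_simps)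
  also have "\<dots> = (-1)^(k*m) * (det ?G * (-1)^(k*m)) * det ?V" unfolding s2 e2 ..
  also have "\<dots> = det ?G * det ?V * ((-1)^(k*m) * (-1)^(k*m))" by (simp add: ac_simps)
  also have "\<dots> = det ?G * det ?V" unfolding s1 by simp
  finally show ?thesis by simp
qed

end

context absS
begin

lemma detD0: "det (mat n n (\<lambda>(a,b). I (Pr a * monom 1 b))) = det (mat n n (\<lambda>(a,b). I (monom 1 (a+b))))"
proof -
  let ?G = "mat n n (\<lambda>(a,b). I (monom 1 (a+b)))"
  let ?A = "mat n n (\<lambda>(i,a). coeff (Pr i) a)"
  let ?B = "mat n n (\<lambda>(j,b). coeff (monom 1 j :: 'r poly) b)"
  have H: "mat n n (\<lambda>(i,j). I (Pr i * monom 1 j)) = ?A * ?G * ?B\<^sup>T"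
    by (rule bilin_mat) (auto intro: Pr_high)
  have B1: "?B = 1\<^sub>m n" by (rule eq_matI) auto
  show ?thesis
    unfolding H B1 by (subst det_mult[of _ n], auto simp: det_mult[of _ n] detA)
qed

lemma part2:
  assumes H_exp: "\<And>i F. i < k \<Longrightarrow> I (F * h i) = (\<Sum>t<k. z i ^ (k-1-t) * (\<Sum>b<k. Uc t b * I (F * monom 1 b)))"
    and nk: "n < k"
  shows "det (mat n n (\<lambda>(i,j). I (monom 1 (i+j)))) * det (mat k k (\<lambda>(i,t). z i ^ (k-1-t)))
    = (-1)^(n*k) * det (mat k k (\<lambda>(i,j). if j < k - n then z i ^ (k-n-1-j) else - I (Pr (j - (k-n)) * h i)))"
proof -
  define d where "d = k - n"
  have kd: "k = d + n" using nk by (simp add: d_def)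
  let ?G = "mat n n (\<lambda>(i,j). I (monom 1 (i+j)))"
  let ?V = "mat k k (\<lambda>(i,t). z i ^ (k-1-t))"
  let ?N = "mat k k (\<lambda>(i,j). if j < k - n then z i ^ (k-n-1-j) else - I (Pr (j - (k-n)) * h i))"
  define Z where "Z = mat k k (\<lambda>(t,j). if j < d then (if t = n + j then 1 else 0)
       else - (\<Sum>b<k. Uc t b * I (Pr (j - d) * monom 1 b)))"
  let ?D0 = "mat n n (\<lambda>(a,b). I (Pr a * monom 1 b))"
  let ?Un = "mat n n (\<lambda>(t,b). Uc t b)"
  have N: "?N = ?V * Z"
  proof (rule eq_matI)
    fix i j assume "i < dim_row (?V * Z)" "j < dim_col (?V * Z)"
    hence ij: "i < k" "j < k" by (auto simp: Z_def)
    show "?N $$ (i,j) = (?V * Z) $$ (i,j)"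
    proof (cases "j < d")
      case True
      have "(?V * Z) $$ (i,j) = (\<Sum>t<k. z i ^ (k-1-t) * (if t = n + j then 1 else 0))"
        using ij True by (simp add: Z_def scalar_prod_def atLeast0LessThan)
      also have "\<dots> = (\<Sum>t<k. if t = n + j then z i ^ (k-1-t) else 0)"
        by (rule sum.cong) auto
      also have "\<dots> = z i ^ (k-1-(n+j))"
        using True kd by (subst sum.delta) auto
      finally show ?thesis using ij True by (simp add: d_def)
    next
      case False
      have "(?V * Z) $$ (i,j) = (\<Sum>t<k. z i ^ (k-1-t) * - (\<Sum>b<k. Uc t b * I (Pr (j - d) * monom 1 b)))"
        using ij False by (simp add: Z_def scalar_prod_def atLeast0LessThan)
      also have "\<dots> = - I (Pr (j - d) * h i)"
        unfolding H_exp[OF ij(1)] by (simp add: sum_negf)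
      finally show ?thesis using ij False by (simp add: d_def)
    qed
  qed (auto simp: Z_def)
  have "det Z = (-1)^(d*n) * det (mat (d+n) (d+n) (\<lambda>(i,j). Z $$ ((if i < d then i + n else i - d), j)))"
    by (rule det_swap_rows) (simp add: Z_def kd)
  also have "mat (d+n) (d+n) (\<lambda>(i,j). Z $$ ((if i < d then i + n else i - d), j))
     = four_block_mat (1\<^sub>m d) (mat d n (\<lambda>(i,j). Z $$ (i + n, j + d))) (0\<^sub>m n d) ((-1) \<cdot>\<^sub>m (?Un * ?D0\<^sup>T))"
  proof (rule eq_matI)
    fix i j assume "i < dim_row (four_block_mat (1\<^sub>m d) (mat d n (\<lambda>(i,j). Z $$ (i + n, j + d))) (0\<^sub>m n d) ((-1) \<cdot>\<^sub>m (?Un * ?D0\<^sup>T)))"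
      "j < dim_col (four_block_mat (1\<^sub>m d) (mat d n (\<lambda>(i,j). Z $$ (i + n, j + d))) (0\<^sub>m n d) ((-1) \<cdot>\<^sub>m (?Un * ?D0\<^sup>T)))"
    hence ij: "i < d + n" "j < d + n" by auto
    show "mat (d+n) (d+n) (\<lambda>(i,j). Z $$ ((if i < d then i + n else i - d), j)) $$ (i,j) =
      four_block_mat (1\<^sub>m d) (mat d n (\<lambda>(i,j). Z $$ (i + n, j + d))) (0\<^sub>m n d) ((-1) \<cdot>\<^sub>m (?Un * ?D0\<^sup>T)) $$ (i,j)"
    proof (cases "i < d")
      case True thus ?thesis using ij kd by (auto simp: Z_def)
    next
      case False
      show ?thesis
      proof (cases "j < d")
        case True thus ?thesis using ij kd \<open>\<not> i < d\<close> by (auto simp: Z_def)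
      next
        case jd: False
        have "(\<Sum>b<k. Uc (i - d) b * I (Pr (j - d) * monom 1 b)) = (\<Sum>b<n. Uc (i - d) b * I (Pr (j - d) * monom 1 b))"
          by (rule sum.mono_neutral_right) (use ij nk \<open>\<not> i < d\<close> in \<open>auto simp: Uc_def d_def\<close>)
        thus ?thesis using ij kd \<open>\<not> i < d\<close> jd
          by (simp add: Z_def scalar_prod_def atLeast0LessThan)
      qed
    qed
  qed auto
  also have "det (four_block_mat (1\<^sub>m d) (mat d n (\<lambda>(i,j). Z $$ (i + n, j + d))) (0\<^sub>m n d) ((-1) \<cdot>\<^sub>m (?Un * ?D0\<^sup>T)))
     = det (1\<^sub>m d) * det ((-1) \<cdot>\<^sub>m (?Un * ?D0\<^sup>T))"
    by (rule det_four_block_mat_lower_left_zero) auto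
  also have "det ((-1) \<cdot>\<^sub>m (?Un * ?D0\<^sup>T)) = (-1)^n * (det ?Un * det ?D0)"
    by (subst det_smult, simp, subst det_mult[of _ n], auto simp: det_transpose[of _ n])
  also have "det ?Un = 1" using nk by (intro det_Uc) simp
  also have "det ?D0 = det ?G" by (rule detD0)
  finally have dZ: "det Z = (-1)^(d*n) * ((-1)^n * det ?G)" by simp
  have dN: "det ?N = det ?V * det Z"
    unfolding N by (rule det_mult) (auto simp: Z_def)
  have e1: "n * k + d * n + n = 2 * (d * n) + n * Suc n" unfolding kd by (simp add: algebra_simps)
  have ev: "even (n * k + d * n + n)"
    unfolding e1 by simp
  have "(-1)^(n*k) * det ?N = (-1)^(n * k + d * n + n) * (det ?G * det ?V)"
    unfolding dN dZ by (simp add: power_add ac_simps)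
  also have "\<dots> = det ?G * det ?V" by (simp only: neg_one_even_power[OF ev] mult_1_left)
  finally show ?thesis by simp
qed

end

lemma coeff_synthetic_div_sum:
  fixes P :: "'b::comm_ring_1 poly"
  shows "coeff (synthetic_div P c) b = (\<Sum>s\<in>{Suc b..degree P}. coeff P s * c ^ (s - Suc b))"
proof (induction P arbitrary: b)
  case 0
  then show ?case by simp
next
  case (pCons a p)
  show ?case
  proof (cases "p = 0")
    case True
    thus ?thesis by (cases b) auto
  next
    case False
    hence dg: "degree (pCons a p) = Suc (degree p)" by simp
    show ?thesis
    proof (cases b)
      case 0
      have "(\<Sum>s\<in>{Suc 0..degree (pCons a p)}. coeff (pCons a p) s * c ^ (s - Suc 0))
          = (\<Sum>s\<in>{0..degree p}. coeff p s * c ^ s)"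
        unfolding dg by (subst sum.shift_bounds_cl_Suc_ivl) simp
      also have "\<dots> = (\<Sum>s\<le>degree p. coeff p s * c ^ s)" by (simp add: atLeast0AtMost)
      also have "\<dots> = poly p c" by (rule poly_altdef[symmetric])
      finally show ?thesis using 0 by simp
    next
      case (Suc b')
      have "(\<Sum>s\<in>{Suc b..degree (pCons a p)}. coeff (pCons a p) s * c ^ (s - Suc b))
          = (\<Sum>s\<in>{Suc b'..degree p}. coeff p s * c ^ (s - Suc b'))"
        unfolding dg Suc by (subst sum.shift_bounds_cl_Suc_ivl) simp
      thus ?thesis using Suc pCons.IH by simp
    qed
  qed
qed

context absS
begin

lemma h_coeff: "coeff (synthetic_div PPk c) b = (\<Sum>t<k. c ^ (k-1-t) * Uc t b)"
proof -
  have "coeff (synthetic_div PPk c) b = (\<Sum>s\<in>{Suc b..k}. coeff PPk s * c ^ (s - Suc b))"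
    by (simp add: coeff_synthetic_div_sum PP_deg)
  also have "\<dots> = (\<Sum>t\<in>{b..<k}. c ^ (k-1-t) * coeff PPk (k - t + b))"
    by (rule sum.reindex_bij_witness[where i="\<lambda>t. k - t + b" and j="\<lambda>s. k + b - s"]) auto
  also have "\<dots> = (\<Sum>t<k. c ^ (k-1-t) * Uc t b)"
    by (rule sum.mono_neutral_cong_left) (auto simp: Uc_def)
  finally show ?thesis .
qed

lemma H_exp: "I (F * synthetic_div PPk c) = (\<Sum>t<k. c ^ (k-1-t) * (\<Sum>b<k. Uc t b * I (F * monom 1 b)))"
proof -
  let ?h = "synthetic_div PPk c"
  have hc: "\<forall>a\<ge>k. coeff ?h a = 0" by (auto simp: h_coeff Uc_def)
  have "F * ?h = (\<Sum>b<k. Polynomial.smult (coeff ?h b) (F * monom 1 b))"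
  proof -
    have m: "\<And>a b. F * monom a b = Polynomial.smult a (F * monom 1 b)"
      by (metis mult_smult_right smult_monom mult.right_neutral)
    have e: "?h = (\<Sum>b<k. monom (coeff ?h b) b)" by (rule poly_expand_lt[OF hc])
    have "F * ?h = F * (\<Sum>b<k. monom (coeff ?h b) b)" by (rule arg_cong[OF e])
    also have "\<dots> = (\<Sum>b<k. F * monom (coeff ?h b) b)" by (rule sum_distrib_left)
    also have "\<dots> = (\<Sum>b<k. Polynomial.smult (coeff ?h b) (F * monom 1 b))" by (rule sum.cong[OF refl]) (rule m)
    finally show ?thesis .
  qed
  hence "I (F * ?h) = (\<Sum>b<k. coeff ?h b * I (F * monom 1 b))"
    by (simp only: I_sum I_smult)
  also have "\<dots> = (\<Sum>b<k. \<Sum>t<k. c ^ (k-1-t) * Uc t b * I (F * monom 1 b))"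
    unfolding h_coeff sum_distrib_right ..
  also have "\<dots> = (\<Sum>t<k. c ^ (k-1-t) * (\<Sum>b<k. Uc t b * I (F * monom 1 b)))"
    by (subst sum.swap) (simp add: sum_distrib_left ac_simps)
  finally show ?thesis .
qed

end

lemma vandermonde:
  fixes z :: "nat \<Rightarrow> 'r::idom"
  shows "det (mat k k (\<lambda>(i,t). z i ^ (k-1-t))) = (\<Prod>i<k. \<Prod>j\<in>{Suc i..<k}. z i - z j)"
proof (induction k arbitrary: z)
  case 0
  then show ?case by (simp add: det_dim_zero)
next
  case (Suc k)
  let ?M = "mat (Suc k) (Suc k) (\<lambda>(i,t). z i ^ (Suc k - 1 - t))"
  let ?W = "mat (Suc k) (Suc k) (\<lambda>(r,c). (if r = c then 1 else 0) + (if r = Suc c then - z 0 else 0))"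
  let ?M2 = "mat (Suc k) (Suc k) (\<lambda>(i,c). if c < k then z (i) ^ (k-1-c) * (z i - z 0) else 1)"
  let ?V' = "mat k k (\<lambda>(i,t). z (Suc i) ^ (k-1-t))"
  let ?Dg = "mat k k (\<lambda>(i,j). if i = j then z (Suc i) - z 0 else 0)"
  have W1: "det ?W = 1" by (rule det_lower_one) auto
  have MW: "?M * ?W = ?M2"
  proof (rule eq_matI)
    fix i c assume "i < dim_row ?M2" "c < dim_col ?M2"
    hence ic: "i < Suc k" "c < Suc k" by auto
    have "(?M * ?W) $$ (i,c) = (\<Sum>r<Suc k. z i ^ (k - r) * ((if r = c then 1 else 0) + (if r = Suc c then - z 0 else 0)))"
      using ic by (simp add: scalar_prod_def atLeast0LessThan)
    also have "\<dots> = (\<Sum>r<Suc k. if r = c then z i ^ (k - r) else 0) + (\<Sum>r<Suc k. if r = Suc c then z i ^ (k - r) * - z 0 else 0)"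
      by (simp add: distrib_left sum.distrib if_distrib[where f="\<lambda>x. _ * x"] cong: if_cong)
    also have "\<dots> = z i ^ (k - c) + (if Suc c < Suc k then z i ^ (k - Suc c) * - z 0 else 0)"
      using ic by (simp add: sum.delta)
    also have "\<dots> = ?M2 $$ (i,c)"
    proof (cases "c < k")
      case True
      hence "k - c = Suc (k - 1 - c)" by simp
      thus ?thesis using ic True by (simp add: algebra_simps)
    next
      case False thus ?thesis using ic by simp
    qed
    finally show "(?M * ?W) $$ (i,c) = ?M2 $$ (i,c)" .
  qed auto
  have "det ?M = det ?M2"
    using det_mult[of ?M "Suc k" ?W] W1 MW by simp
  also have "det ?M2 = (-1)^(1*k) * det (mat (1+k) (1+k) (\<lambda>(i,j). ?M2 $$ (i, (if j < 1 then j + k else j - 1))))"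
    by (rule det_swap_cols) simp
  also have "mat (1+k) (1+k) (\<lambda>(i,j). ?M2 $$ (i, (if j < 1 then j + k else j - 1)))
      = four_block_mat (1\<^sub>m 1) (0\<^sub>m 1 k) (mat k 1 (\<lambda>_. 1)) (?Dg * ?V')"
  proof (rule eq_matI)
    fix i j assume "i < dim_row (four_block_mat (1\<^sub>m 1) (0\<^sub>m 1 k) (mat k 1 (\<lambda>_. 1)) (?Dg * ?V'))"
      "j < dim_col (four_block_mat (1\<^sub>m 1) (0\<^sub>m 1 k) (mat k 1 (\<lambda>_. 1)) (?Dg * ?V'))"
    hence ij: "i < 1 + k" "j < 1 + k" by auto
    show "mat (1+k) (1+k) (\<lambda>(i,j). ?M2 $$ (i, (if j < 1 then j + k else j - 1))) $$ (i,j)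
      = four_block_mat (1\<^sub>m 1) (0\<^sub>m 1 k) (mat k 1 (\<lambda>_. 1)) (?Dg * ?V') $$ (i,j)"
    proof (cases "j < 1")
      case True thus ?thesis using ij by auto
    next
      case False
      show ?thesis
      proof (cases "i < 1")
        case True thus ?thesis using ij False by auto
      next
        case iF: False
        then obtain i' where i': "i = Suc i'" by (cases i) auto
        have "(?Dg * ?V') $$ (i', j - 1) = (\<Sum>r<k. (if i' = r then z (Suc i') - z 0 else 0) * z (Suc r) ^ (k - 1 - (j - 1)))"
          using ij False i' by (simp add: scalar_prod_def atLeast0LessThan)
        also have "\<dots> = (\<Sum>r<k. if r = i' then (z (Suc i') - z 0) * z (Suc r) ^ (k - 1 - (j - 1)) else 0)"
          by (rule sum.cong) auto
        also have "\<dots> = (z (Suc i') - z 0) * z (Suc i') ^ (k - 1 - (j - 1))"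
          using ij i' by (subst sum.delta) auto
        finally show ?thesis using ij False i' by (simp add: ac_simps)
      qed
    qed
  qed auto
  also have "det (four_block_mat (1\<^sub>m 1) (0\<^sub>m 1 k) (mat k 1 (\<lambda>_. 1)) (?Dg * ?V')) = det (1\<^sub>m 1) * det (?Dg * ?V')"
    by (rule det_four_block_mat_upper_right_zero) auto
  also have "det (?Dg * ?V') = det ?Dg * det ?V'" by (rule det_mult) auto
  also have "det ?Dg = (\<Prod>i<k. z (Suc i) - z 0)" by (subst det_upper_prod[of _ k]) auto
  also have "det ?V' = (\<Prod>i<k. \<Prod>j\<in>{Suc i..<k}. z (Suc i) - z (Suc j))" by (rule Suc.IH)
  finally have L: "det ?M = (-1)^k * (\<Prod>i<k. z (Suc i) - z 0) * (\<Prod>i<k. \<Prod>j\<in>{Suc i..<k}. z (Suc i) - z (Suc j))"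
    by simp
  have "(\<Prod>i<Suc k. \<Prod>j\<in>{Suc i..<Suc k}. z i - z j)
      = (\<Prod>j\<in>{Suc 0..<Suc k}. z 0 - z j) * (\<Prod>i<k. \<Prod>j\<in>{Suc (Suc i)..<Suc k}. z (Suc i) - z j)"
    by (rule prod.lessThan_Suc_shift)
  also have "(\<Prod>j\<in>{Suc 0..<Suc k}. z 0 - z j) = (\<Prod>j\<in>{0..<k}. z 0 - z (Suc j))"
    by (rule prod.shift_bounds_Suc_ivl)
  also have "\<dots> = (\<Prod>j\<in>{0..<k}. - (z (Suc j) - z 0))" by simp
  also have "\<dots> = (-1)^k * (\<Prod>j<k. z (Suc j) - z 0)" by (simp only: prod_uminus atLeast0LessThan card_lessThan)
  also have "(\<Prod>i<k. \<Prod>j\<in>{Suc (Suc i)..<Suc k}. z (Suc i) - z j) = (\<Prod>i<k. \<Prod>j\<in>{Suc i..<k}. z (Suc i) - z (Suc j))"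
    by (rule prod.cong[OF refl], rule prod.shift_bounds_Suc_ivl)
  finally show ?case using L by simp
qed

lemma hankel_prod:
  assumes "OP L p \<omega>"
  shows "hankel_det L m = (\<Prod>i<m. \<omega> i)"
proof -
  interpret OP L p \<omega> by (rule assms)
  interpret H: absS L L p \<omega> "\<lambda>x. x" 1 0
  proof unfold_locales
    show "\<And>P Q. L (P + Q) = L P + L Q" by (rule L_add)
    show "\<And>c P. L (Polynomial.smult c P) = c * L P" by (rule L_smult)
  qed (auto simp: map_poly_idI)
  have "det (mat (0+m) (0+m) (\<lambda>(i,j). L (monom 1 (i+j)))) * det (mat 0 0 (\<lambda>(i,t). (\<lambda>_. 0) i ^ (0-1-t)))
    = (-1)^((0+m)*0) * (\<Prod>i<m. \<omega> i) * det (mat 0 0 (\<lambda>(i,j). - L (H.Pr (m + j) * (\<lambda>_. 0) i)))"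
    by (rule H.part1) auto
  thus ?thesis unfolding hankel_det_def by simp
qed

lemma degree_PP: "degree (PP k :: 'a::field_char_0 lpoly fls poly) = k"
  unfolding PP_def by (subst degree_prod_sum_eq) auto

lemma coeff_PP: "coeff (PP k :: 'a::field_char_0 lpoly fls poly) k = 1"
proof -
  have "lead_coeff (PP k :: 'a lpoly fls poly) = 1"
    unfolding PP_def lead_coeff_prod by simp
  thus ?thesis using degree_PP[of k] by (metis (no_types))
qed

lemma vand_eq: "vand k = (\<Prod>i<k. \<Prod>j\<in>{Suc i..<k}. yv (i+1) - yv (j+1) :: 'a::comm_ring_1 lpoly fls)"
proof -
  have "(\<Prod>i<k. \<Prod>j\<in>{Suc i..<k}. yv (i+1) - yv (j+1) :: 'a lpoly fls)
      = (\<Prod>(i,j)\<in>(SIGMA i:{..<k}. {Suc i..<k}). yv (i+1) - yv (j+1))"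
    by (rule prod.Sigma) auto
  also have "\<dots> = (\<Prod>(i,j)\<in>{(i,j). 1 \<le> i \<and> i < j \<and> j \<le> k}. yv i - yv j)"
    by (rule prod.reindex_bij_witness[where i="\<lambda>(i,j). (i - 1, j - 1)" and j="\<lambda>(i,j). (i+1, j+1)"]) auto
  finally show ?thesis unfolding vand_def by simp
qed

theorem corollary3:
  fixes L :: "'a::field_char_0 poly \<Rightarrow> 'a"
    and p :: "nat \<Rightarrow> 'a poly"
    and \<omega> :: "nat \<Rightarrow> 'a"
    and k n :: nat
  assumes L_add: "\<And>f g. L (f + g) = L f + L g"
    and L_smult: "\<And>c f. L (Polynomial.smult c f) = c * L f"
    and p_monic: "\<And>m. lead_coeff (p m) = 1"
    and p_deg: "\<And>m. degree (p m) = m"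
    and p_orth: "\<And>m m'. L (p m * p m') = (if m = m' then \<omega> m' else 0)"
    and \<omega>_nz: "\<And>m. \<omega> m \<noteq> 0"
  shows "(k \<le> n \<longrightarrow>
           det (mat n n (\<lambda>(i,j). cint L (monom 1 (i + j)) k)) * vand k
           = (-1) ^ (n * k) * const_fls (hankel_det L (n - k))
             * det (mat k k (\<lambda>(i,j). qv L (p (n - k + j)) (i + 1))))
       \<and> (n < k \<longrightarrow>
           det (mat n n (\<lambda>(i,j). cint L (monom 1 (i + j)) k)) * vand k
           = (-1) ^ (n * k)
             * det (mat k k (\<lambda>(i,j). if j < k - n then yv (i + 1) ^ (k - n - 1 - j)
                                     else qv L (p (j - (k - n))) (i + 1))))"
proof -
  interpret Lf: Lfun L by unfold_locales (fact L_add, fact L_smult)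
  have op: "OP L p \<omega>" by unfold_locales (fact L_add, fact L_smult, fact p_monic, fact p_deg, fact p_orth)
  interpret A: absS "II L k" L p \<omega> const_fls "PP k" k
  proof unfold_locales
    show "\<And>P Q. II L k (P + Q) = II L k P + II L k Q" by (rule II_add)
    show "\<And>c P. II L k (Polynomial.smult c P) = c * II L k P" by (rule II_smult)
    show "\<And>f g. L (f + g) = L f + L g" by (fact L_add)
    show "\<And>c f. L (Polynomial.smult c f) = c * L f" by (fact L_smult)
    show "\<And>m. lead_coeff (p m) = 1" by (fact p_monic)
    show "\<And>m. degree (p m) = m" by (fact p_deg)
    show "\<And>m m'. L (p m * p m') = (if m = m' then \<omega> m' else 0)" by (fact p_orth)
    show "const_fls 0 = 0" by simp
    show "const_fls 1 = 1" by simp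
    show "\<And>f. II L k (map_poly const_fls f * PP k) = const_fls (L f)" by (rule Lf.II_PP)
    show "degree (PP k :: 'a lpoly fls poly) = k" by (rule degree_PP)
    show "coeff (PP k :: 'a lpoly fls poly) k = 1" by (rule coeff_PP)
  qed
  let ?z = "\<lambda>i. yv (i + 1) :: 'a lpoly fls"
  let ?h = "\<lambda>i. synthetic_div (PP k) (yv (i + 1)) :: 'a lpoly fls poly"
  have Hexp: "\<And>i F. i < k \<Longrightarrow> II L k (F * ?h i) = (\<Sum>t<k. ?z i ^ (k-1-t) * (\<Sum>b<k. A.Uc t b * II L k (F * monom 1 b)))"
    by (rule A.H_exp)
  have G: "mat n n (\<lambda>(i,j). cint L (monom 1 (i + j)) k) = mat n n (\<lambda>(i,j). II L k (monom 1 (i + j)))"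
    by (simp add: cint_II)
  have V: "det (mat k k (\<lambda>(i,t). ?z i ^ (k-1-t))) = vand k"
    unfolding vandermonde vand_eq ..
  have qv_eq: "\<And>i q. i < k \<Longrightarrow> qv L q (i + 1) = - II L k (map_poly const_fls q * ?h i)"
    by (rule qv_II) auto
  have qv_eq': "\<And>i q. i < k \<Longrightarrow> qv L q (Suc i) = - II L k (map_poly const_fls q * synthetic_div (PP k) (yv (Suc i)))"
    using qv_eq by simp
  show ?thesis
  proof (intro conjI impI)
    assume kn: "k \<le> n"
    define m where "m = n - k"
    have nm: "n = k + m" using kn by (simp add: m_def)
    have P1: "det (mat (k+m) (k+m) (\<lambda>(i,j). II L k (monom 1 (i+j)))) * det (mat k k (\<lambda>(i,t). ?z i ^ (k-1-t)))
      = (-1)^((k+m)*k) * (\<Prod>i<m. const_fls (\<omega> i)) * det (mat k k (\<lambda>(i,j). - II L k (A.Pr (m + j) * ?h i)))"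
      by (rule A.part1[where h="?h" and z="?z", OF Hexp])
    have Qm: "mat k k (\<lambda>(i,j). qv L (p (n - k + j)) (i + 1)) = mat k k (\<lambda>(i,j). - II L k (A.Pr (m + j) * ?h i))"
      by (rule eq_matI) (auto simp: qv_eq' A.Pr_def m_def)
    have Hk: "(\<Prod>i<m. const_fls (\<omega> i)) = (const_fls (hankel_det L (n - k)) :: 'a lpoly fls)"
      unfolding hankel_prod[OF op] const_fls_prod m_def ..
    show "det (mat n n (\<lambda>(i,j). cint L (monom 1 (i + j)) k)) * vand k
           = (-1) ^ (n * k) * const_fls (hankel_det L (n - k))
             * det (mat k k (\<lambda>(i,j). qv L (p (n - k + j)) (i + 1)))"
      unfolding G V[symmetric] Qm Hk[symmetric] using P1 by (simp add: nm)
  next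
    assume nk: "n < k"
    have P2: "det (mat n n (\<lambda>(i,j). II L k (monom 1 (i+j)))) * det (mat k k (\<lambda>(i,t). ?z i ^ (k-1-t)))
      = (-1)^(n*k) * det (mat k k (\<lambda>(i,j). if j < k - n then ?z i ^ (k-n-1-j) else - II L k (A.Pr (j - (k-n)) * ?h i)))"
      by (rule A.part2[where h="?h" and z="?z", OF Hexp nk])
    have Nm: "mat k k (\<lambda>(i,j). if j < k - n then yv (i + 1) ^ (k - n - 1 - j) else qv L (p (j - (k - n))) (i + 1))
      = mat k k (\<lambda>(i,j). if j < k - n then ?z i ^ (k-n-1-j) else - II L k (A.Pr (j - (k-n)) * ?h i))"
      by (rule eq_matI) (auto simp: qv_eq' A.Pr_def)
    show "det (mat n n (\<lambda>(i,j). cint L (monom 1 (i + j)) k)) * vand k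
           = (-1) ^ (n * k)
             * det (mat k k (\<lambda>(i,j). if j < k - n then yv (i + 1) ^ (k - n - 1 - j)
                                     else qv L (p (j - (k - n))) (i + 1)))"
      unfolding G V[symmetric] Nm by (rule P2)
  qed
qed

end
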